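(* Let $T^\ast$ be the minimal matrix representation of a $0/1$-triangle $\mathcal{T}$ in $[0,1]^n$, written (as is always possible) with nonnegative integers $a,b,c,d$, $a+b+c+d=n$, such that the first $a$ rows of $T^\ast$ are $(0,1,1)$, the next $b$ rows $(0,1,0)$, the next $c$ rows $(0,0,1)$ and the last $d$ rows $(0,0,0)$, where $1\le a+b$, $a\le b\le c$. Then: if $a=0$, $\mathcal{T}$ is a right triangle; if $a>0$, $\mathcal{T}$ has acute angles only.
   Context: A $0/1$-triangle in $[0,1]^n$ is the convex hull of three distinct points of $\{0,1\}^n$. Column number of $x\in\{0,1\}^n$: $(2^0,\dots,2^{n-1})x$. For an $n\times k$ $0/1$-matrix $P$ with distinct columns, $\nu(P)$ is the increasingly sorted vector of its column numbers. $P$ is a minimal matrix representation if its column numbers are strictly increasing left to right and $\nu(P)\preceq\nu(Q)$ lexicographically for every $Q$ obtained from $P$ by complementing some subset of its rows and then permuting its rows. *)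

theory Defs
  imports Complex_Main "HOL-Combinatorics.Permutations"
begin

text \<open>Points of {0,1}^n are functions nat => nat whose values at the
coordinates i < n lie in {0,1} (other coordinates are ignored).
An n x k 0/1-matrix is a function P :: nat => nat => nat, P i j being the
entry in row i < n and column j < k.\<close>

definition zero_one_point :: "nat \<Rightarrow> (nat \<Rightarrow> nat) \<Rightarrow> bool" where
  "zero_one_point n x \<longleftrightarrow> (\<forall>i<n. x i \<in> {0,1})"

definition points_distinct :: "nat \<Rightarrow> (nat \<Rightarrow> nat) \<Rightarrow> (nat \<Rightarrow> nat) \<Rightarrow> bool" where
  "points_distinct n x y \<longleftrightarrow> (\<exists>i<n. x i \<noteq> y i)"

definition col_num :: "nat \<Rightarrow> (nat \<Rightarrow> nat \<Rightarrow> nat) \<Rightarrow> nat \<Rightarrow> nat" where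
  "col_num n P j = (\<Sum>i<n. 2 ^ i * P i j)"

definition nu :: "nat \<Rightarrow> nat \<Rightarrow> (nat \<Rightarrow> nat \<Rightarrow> nat) \<Rightarrow> nat list" where
  "nu n k P = sort (map (col_num n P) [0..<k])"

definition lex_le :: "nat list \<Rightarrow> nat list \<Rightarrow> bool" where
  "lex_le xs ys \<longleftrightarrow> xs = ys \<or> (xs, ys) \<in> lexord {(u, v). u < v}"

definition row_transform ::
  "nat set \<Rightarrow> (nat \<Rightarrow> nat) \<Rightarrow> (nat \<Rightarrow> nat \<Rightarrow> nat) \<Rightarrow> (nat \<Rightarrow> nat \<Rightarrow> nat)" where
  "row_transform S \<sigma> P = (\<lambda>i j. if \<sigma> i \<in> S then 1 - P (\<sigma> i) j else P (\<sigma> i) j)"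

definition zero_one_matrix :: "nat \<Rightarrow> nat \<Rightarrow> (nat \<Rightarrow> nat \<Rightarrow> nat) \<Rightarrow> bool" where
  "zero_one_matrix n k P \<longleftrightarrow> (\<forall>i<n. \<forall>j<k. P i j \<in> {0,1})"

definition minimal_matrix_rep :: "nat \<Rightarrow> nat \<Rightarrow> (nat \<Rightarrow> nat \<Rightarrow> nat) \<Rightarrow> bool" where
  "minimal_matrix_rep n k P \<longleftrightarrow>
     zero_one_matrix n k P \<and>
     (\<forall>j1<k. \<forall>j2<k. j1 < j2 \<longrightarrow> col_num n P j1 < col_num n P j2) \<and>
     (\<forall>S \<sigma>. S \<subseteq> {..<n} \<longrightarrow> \<sigma> permutes {..<n} \<longrightarrow>
        lex_le (nu n k P) (nu n k (row_transform S \<sigma> P)))"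

definition is_matrix_rep_of_triangle ::
  "nat \<Rightarrow> (nat \<Rightarrow> nat \<Rightarrow> nat) \<Rightarrow> (nat \<Rightarrow> (nat \<Rightarrow> nat)) \<Rightarrow> bool" where
  "is_matrix_rep_of_triangle n P V \<longleftrightarrow>
     (\<exists>S \<sigma> \<tau>. S \<subseteq> {..<n} \<and> \<sigma> permutes {..<n} \<and> \<tau> permutes {0,1,2::nat} \<and>
        (\<forall>i<n. \<forall>j<3. P i j = row_transform S \<sigma> (\<lambda>r c. V (\<tau> c) r) i j))"

definition minimal_matrix_rep_of_triangle ::
  "nat \<Rightarrow> (nat \<Rightarrow> nat \<Rightarrow> nat) \<Rightarrow> (nat \<Rightarrow> (nat \<Rightarrow> nat)) \<Rightarrow> bool" where
  "minimal_matrix_rep_of_triangle n P V \<longleftrightarrow>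
     is_matrix_rep_of_triangle n P V \<and> minimal_matrix_rep n 3 P"

definition dotn :: "nat \<Rightarrow> (nat \<Rightarrow> real) \<Rightarrow> (nat \<Rightarrow> real) \<Rightarrow> real" where
  "dotn n u v = (\<Sum>i<n. u i * v i)"

definition normn :: "nat \<Rightarrow> (nat \<Rightarrow> real) \<Rightarrow> real" where
  "normn n u = sqrt (dotn n u u)"

definition vertex_angle :: "nat \<Rightarrow> (nat \<Rightarrow> real) \<Rightarrow> (nat \<Rightarrow> real) \<Rightarrow> (nat \<Rightarrow> real) \<Rightarrow> real" where
  "vertex_angle n x y z =
     arccos (dotn n (\<lambda>i. y i - x i) (\<lambda>i. z i - x i) /
             (normn n (\<lambda>i. y i - x i) * normn n (\<lambda>i. z i - x i)))"

definition right_triangle :: "nat \<Rightarrow> (nat \<Rightarrow> real) \<Rightarrow> (nat \<Rightarrow> real) \<Rightarrow> (nat \<Rightarrow> real) \<Rightarrow> bool" where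
  "right_triangle n x y z \<longleftrightarrow>
     vertex_angle n x y z = pi/2 \<or> vertex_angle n y z x = pi/2 \<or> vertex_angle n z x y = pi/2"

definition acute_triangle :: "nat \<Rightarrow> (nat \<Rightarrow> real) \<Rightarrow> (nat \<Rightarrow> real) \<Rightarrow> (nat \<Rightarrow> real) \<Rightarrow> bool" where
  "acute_triangle n x y z \<longleftrightarrow>
     vertex_angle n x y z < pi/2 \<and> vertex_angle n y z x < pi/2 \<and> vertex_angle n z x y < pi/2"

definition to_real :: "(nat \<Rightarrow> nat) \<Rightarrow> (nat \<Rightarrow> real)" where
  "to_real x = (\<lambda>i. real (x i))"

end

theory Submission
  imports Defs
begin

lemma acute_aux:
  fixes D X Y :: real
  assumes "0 < D" "0 < X" "0 < Y" "D^2 \<le> X * Y"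
  shows "arccos (D / (sqrt X * sqrt Y)) < pi/2"
proof -
  have s: "0 < sqrt X * sqrt Y" using assms by simp
  have "D \<le> sqrt (X*Y)" using assms(4) assms(1) by (simp add: real_le_rsqrt)
  hence "D \<le> sqrt X * sqrt Y" by (simp add: real_sqrt_mult)
  hence le1: "D / (sqrt X * sqrt Y) \<le> 1" using s by simp
  have gt0: "0 < D / (sqrt X * sqrt Y)" using s assms(1) by simp
  have "arccos (D / (sqrt X * sqrt Y)) < arccos 0"
    by (rule arccos_less_arccos) (use le1 gt0 in auto)
  thus ?thesis by simp
qed

lemma ind_sum:
  assumes "p \<le> q" "q \<le> n"
  shows "(\<Sum>i<n. (if p \<le> i \<and> i < q then 1 else 0 :: real)) = real q - real p"
proof -
  have "(\<Sum>i<n. (if p \<le> i \<and> i < q then 1 else 0 :: real)) = (\<Sum>i\<in>{i\<in>{..<n}. p \<le> i \<and> i < q}. 1)"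
    by (subst sum.inter_filter[symmetric]) auto
  also have "{i\<in>{..<n}. p \<le> i \<and> i < q} = {p..<q}" using assms by auto
  finally show ?thesis using assms by simp
qed

theorem corollary4p16:
  fixes n a b c d :: nat and V :: "nat \<Rightarrow> (nat \<Rightarrow> nat)" and T :: "nat \<Rightarrow> nat \<Rightarrow> nat"
  assumes pts: "\<forall>j<3. zero_one_point n (V j)"
    and dist: "points_distinct n (V 0) (V 1)" "points_distinct n (V 0) (V 2)"
              "points_distinct n (V 1) (V 2)"
    and rep: "minimal_matrix_rep_of_triangle n T V"
    and sum: "a + b + c + d = n"
    and col0: "\<forall>i<n. T i 0 = 0"
    and col1: "\<forall>i<n. T i 1 = (if i < a + b then 1 else 0)"
    and col2: "\<forall>i<n. T i 2 = (if i < a \<or> (a + b \<le> i \<and> i < a + b + c) then 1 else 0)"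
    and ab: "1 \<le> a + b" and "a \<le> b" and "b \<le> c"
  shows "(a = 0 \<longrightarrow> right_triangle n (to_real (V 0)) (to_real (V 1)) (to_real (V 2))) \<and>
         (a > 0 \<longrightarrow> acute_triangle n (to_real (V 0)) (to_real (V 1)) (to_real (V 2)))"
proof -
  from rep obtain S \<sigma> \<tau> where S: "S \<subseteq> {..<n}" and sg: "\<sigma> permutes {..<n}"
    and tau: "\<tau> permutes {0,1,2::nat}"
    and TT: "\<forall>i<n. \<forall>j<3. T i j = row_transform S \<sigma> (\<lambda>r c. V (\<tau> c) r) i j"
    unfolding minimal_matrix_rep_of_triangle_def is_matrix_rep_of_triangle_def by blast
  define P where "P k = to_real (V k)" for k
  define G where "G j k l = (\<Sum>i<n. (real (T i j) - real (T i l)) * (real (T i k) - real (T i l)))" for j k l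
  have tau3: "\<tau> j < 3" if "j < 3" for j
  proof -
    have "j \<in> {0,1,2}" using that by (auto simp: eval_nat_numeral less_Suc_eq)
    hence "\<tau> j \<in> {0,1,2}" using permutes_in_image[OF tau] by simp
    thus ?thesis by auto
  qed
  have key: "dotn n (\<lambda>i. P (\<tau> j) i - P (\<tau> l) i) (\<lambda>i. P (\<tau> k) i - P (\<tau> l) i) = G j k l"
    if jkl: "j < 3" "k < 3" "l < 3" for j k l
  proof -
    define f where "f r = (P (\<tau> j) r - P (\<tau> l) r) * (P (\<tau> k) r - P (\<tau> l) r)" for r
    have "dotn n (\<lambda>i. P (\<tau> j) i - P (\<tau> l) i) (\<lambda>i. P (\<tau> k) i - P (\<tau> l) i) = (\<Sum>r<n. f r)"
      unfolding dotn_def f_def by simp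
    also have "\<dots> = (\<Sum>i<n. f (\<sigma> i))"
      using sum.reindex_bij_betw[OF permutes_imp_bij[OF sg], of f] by simp
    also have "\<dots> = G j k l" unfolding G_def
    proof (rule sum.cong)
      fix i assume "i \<in> {..<n}"
      hence i: "i < n" by simp
      have si: "\<sigma> i < n" using permutes_in_image[OF sg] i by auto
      have v01: "V (\<tau> m) (\<sigma> i) \<in> {0,1}" if "m < 3" for m
        using pts tau3[OF that] si unfolding zero_one_point_def by blast
      have Tm: "T i m = (if \<sigma> i \<in> S then 1 - V (\<tau> m) (\<sigma> i) else V (\<tau> m) (\<sigma> i))" if "m < 3" for m
        using TT i that unfolding row_transform_def by simp
      have R: "real (T i m) = (if \<sigma> i \<in> S then 1 - P (\<tau> m) (\<sigma> i) else P (\<tau> m) (\<sigma> i))"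
        if "m < 3" for m
        using v01[OF that] Tm[OF that] unfolding P_def to_real_def by auto
      show "f (\<sigma> i) = (real (T i j) - real (T i l)) * (real (T i k) - real (T i l))"
        unfolding R[OF jkl(1)] R[OF jkl(2)] R[OF jkl(3)] f_def
        by (cases "\<sigma> i \<in> S") (simp_all add: algebra_simps)
    qed simp
    finally show ?thesis .
  qed
  have n: "a + b + c \<le> n" using sum by simp
  have c0: "real (T i 0) = 0" if "i<n" for i using col0 that by simp
  have c1: "real (T i 1) = (if i < a + b then 1 else 0)" if "i<n" for i using col1 that by simp
  have c2: "real (T i 2) = (if i < a \<or> (a + b \<le> i \<and> i < a + b + c) then 1 else 0)" if "i<n" for i
    using col2 that by simp
  have G120: "G 1 2 0 = a"
  proof -
    have "G 1 2 0 = (\<Sum>i<n. (if 0 \<le> i \<and> i < a then 1 else 0 :: real))"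
      unfolding G_def by (rule sum.cong[OF refl], drule lessThan_iff[THEN iffD1], simp only: c0 c1 c2, simp)
    thus ?thesis using ind_sum[of 0 a n] n by simp
  qed
  have G021: "G 0 2 1 = b"
  proof -
    have "G 0 2 1 = (\<Sum>i<n. (if a \<le> i \<and> i < a + b then 1 else 0 :: real))"
      unfolding G_def by (rule sum.cong[OF refl], drule lessThan_iff[THEN iffD1], simp only: c0 c1 c2, simp)
    thus ?thesis using ind_sum[of a "a+b" n] n by simp
  qed
  have G012: "G 0 1 2 = c"
  proof -
    have "G 0 1 2 = (\<Sum>i<n. (if a + b \<le> i \<and> i < a + b + c then 1 else 0 :: real))"
      unfolding G_def by (rule sum.cong[OF refl], drule lessThan_iff[THEN iffD1], simp only: c0 c1 c2, simp)
    thus ?thesis using ind_sum[of "a+b" "a+b+c" n] n by simp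
  qed
  have G110: "G 1 1 0 = a + b"
  proof -
    have "G 1 1 0 = (\<Sum>i<n. (if 0 \<le> i \<and> i < a + b then 1 else 0 :: real))"
      unfolding G_def by (rule sum.cong[OF refl], drule lessThan_iff[THEN iffD1], simp only: c0 c1 c2, simp)
    thus ?thesis using ind_sum[of 0 "a+b" n] n by simp
  qed
  have G221: "G 2 2 1 = b + c"
  proof -
    have "G 2 2 1 = (\<Sum>i<n. (if a \<le> i \<and> i < a + b + c then 1 else 0 :: real))"
      unfolding G_def by (rule sum.cong[OF refl], drule lessThan_iff[THEN iffD1], simp only: c0 c1 c2, simp)
    thus ?thesis using ind_sum[of a "a+b+c" n] n by simp
  qed
  have G220: "G 2 2 0 = a + c"
  proof -
    have "G 2 2 0 = (\<Sum>i<n. (if 0 \<le> i \<and> i < a then 1 else 0 :: real)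
                  + (if a + b \<le> i \<and> i < a + b + c then 1 else 0 :: real))"
      unfolding G_def by (rule sum.cong[OF refl], drule lessThan_iff[THEN iffD1], simp only: c0 c1 c2, simp)
    thus ?thesis using ind_sum[of 0 a n] ind_sum[of "a+b" "a+b+c" n] n
      by (simp add: sum.distrib)
  qed
  have Gc: "G j k l = G k j l" for j k l unfolding G_def by (simp add: mult.commute)
  have Gs: "G j j l = G l l j" for j l unfolding G_def by (rule sum.cong) (auto simp: algebra_simps)
  have G210: "G 2 1 0 = a" using Gc[of 2 1 0] G120 by simp
  have G201: "G 2 0 1 = b" using Gc[of 2 0 1] G021 by simp
  have G102: "G 1 0 2 = c" using Gc[of 1 0 2] G012 by simp
  have G001: "G 0 0 1 = a + b" using Gs[of 0 1] G110 by simp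
  have G112: "G 1 1 2 = b + c" using Gs[of 1 2] G221 by simp
  have G002: "G 0 0 2 = a + c" using Gs[of 0 2] G220 by simp
  note tab = G120 G021 G012 G110 G221 G220 G210 G201 G102 G001 G112 G002
  have surj: "\<exists>p<3. \<tau> p = m" if "m < 3" for m
  proof -
    have "m \<in> {0,1,2}" using that by (auto simp: eval_nat_numeral less_Suc_eq)
    hence "m \<in> \<tau> ` {0,1,2}" by (simp only: permutes_image[OF tau])
    then obtain p where "m = \<tau> p" "p \<in> {0,1,2}" by (rule imageE)
    moreover have "p < 3" using \<open>p \<in> {0,1,2}\<close> by auto
    ultimately show ?thesis by blast
  qed
  obtain p0 where p0: "p0 < 3" "\<tau> p0 = 0" using surj[of 0] by auto
  obtain p1 where p1: "p1 < 3" "\<tau> p1 = 1" using surj[of 1] by auto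
  obtain p2 where p2: "p2 < 3" "\<tau> p2 = 2" using surj[of 2] by auto
  have VA: "vertex_angle n (P (\<tau> l)) (P (\<tau> j)) (P (\<tau> k))
      = arccos (G j k l / (sqrt (G j j l) * sqrt (G k k l)))"
    if "j < 3" "k < 3" "l < 3" for j k l
    unfolding vertex_angle_def normn_def using key that by simp
  have A0: "vertex_angle n (to_real (V 0)) (to_real (V 1)) (to_real (V 2))
      = arccos (G p1 p2 p0 / (sqrt (G p1 p1 p0) * sqrt (G p2 p2 p0)))"
    using VA[OF p1(1) p2(1) p0(1)] p0 p1 p2 unfolding P_def by simp
  have A1: "vertex_angle n (to_real (V 1)) (to_real (V 2)) (to_real (V 0))
      = arccos (G p2 p0 p1 / (sqrt (G p2 p2 p1) * sqrt (G p0 p0 p1)))"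
    using VA[OF p2(1) p0(1) p1(1)] p0 p1 p2 unfolding P_def by simp
  have A2: "vertex_angle n (to_real (V 2)) (to_real (V 0)) (to_real (V 1))
      = arccos (G p0 p1 p2 / (sqrt (G p0 p0 p2) * sqrt (G p1 p1 p2)))"
    using VA[OF p0(1) p1(1) p2(1)] p0 p1 p2 unfolding P_def by simp
  have dp: "p0 \<noteq> p1" "p0 \<noteq> p2" "p1 \<noteq> p2" using p0 p1 p2 by auto
  have cases: "(p0 = 0 \<and> p1 = 1 \<and> p2 = 2) \<or> (p0 = 0 \<and> p1 = 2 \<and> p2 = 1) \<or>
     (p0 = 1 \<and> p1 = 0 \<and> p2 = 2) \<or> (p0 = 1 \<and> p1 = 2 \<and> p2 = 0) \<or>
     (p0 = 2 \<and> p1 = 0 \<and> p2 = 1) \<or> (p0 = 2 \<and> p1 = 1 \<and> p2 = 0)"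
    using p0(1) p1(1) p2(1) dp by (auto simp: eval_nat_numeral less_Suc_eq)
  have acA: "arccos (real a / (sqrt (real a + real b) * sqrt (real a + real c))) < pi/2"
    "arccos (real b / (sqrt (real a + real b) * sqrt (real b + real c))) < pi/2"
    "arccos (real c / (sqrt (real a + real c) * sqrt (real b + real c))) < pi/2"
    "arccos (real a / (sqrt (real a + real c) * sqrt (real a + real b))) < pi/2"
    "arccos (real b / (sqrt (real b + real c) * sqrt (real a + real b))) < pi/2"
    "arccos (real c / (sqrt (real b + real c) * sqrt (real a + real c))) < pi/2"
    if "a > 0"
  proof -
    have q: "(x::real) ^ 2 \<le> (x+y)*(x+z)" "x ^ 2 \<le> (x+z)*(x+y)" "x ^ 2 \<le> (y+x)*(z+x)"
        "x^2 \<le> (y+x)*(x+z)" "x^2 \<le> (x+y)*(z+x)" "x^2 \<le> (z+x)*(x+y)" "x^2 \<le> (x+z)*(y+x)"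
        "x^2 \<le> (z+x)*(y+x)"
      if "0\<le>x" "0\<le>y" "0\<le>z" for x y z
      using that by (simp_all add: power2_eq_square algebra_simps)
    have pos: "real a > 0" "real b > 0" "real c > 0" using that \<open>a \<le> b\<close> \<open>b \<le> c\<close> by auto
    show "arccos (real a / (sqrt (real a + real b) * sqrt (real a + real c))) < pi/2"
      by (rule acute_aux) (use pos q in auto)
    show "arccos (real b / (sqrt (real a + real b) * sqrt (real b + real c))) < pi/2"
      by (rule acute_aux) (use pos q in auto)
    show "arccos (real c / (sqrt (real a + real c) * sqrt (real b + real c))) < pi/2"
      by (rule acute_aux) (use pos q in auto)
    show "arccos (real a / (sqrt (real a + real c) * sqrt (real a + real b))) < pi/2"
      by (rule acute_aux) (use pos q in auto)
    show "arccos (real b / (sqrt (real b + real c) * sqrt (real a + real b))) < pi/2"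
      by (rule acute_aux) (use pos q in auto)
    show "arccos (real c / (sqrt (real b + real c) * sqrt (real a + real c))) < pi/2"
      by (rule acute_aux) (use pos q in auto)
  qed
  show ?thesis
  proof (intro conjI impI)
    assume "a = 0"
    thus "right_triangle n (to_real (V 0)) (to_real (V 1)) (to_real (V 2))"
      unfolding right_triangle_def A0 A1 A2 using cases by (elim disjE conjE; hypsubst; simp only: tab; simp)
  next
    assume "a > 0"
    note acA[OF this]
    thus "acute_triangle n (to_real (V 0)) (to_real (V 1)) (to_real (V 2))"
      unfolding acute_triangle_def A0 A1 A2 using cases by (elim disjE conjE; hypsubst; simp only: tab; simp)
  qed
qed

end
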